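(* Let $S$ be a left amenable group, written additively, and let $X=Z^{*}$ be a dual Banach space. Let $W_{wbc}(X)$ be the family of all nonempty weak$^{*}$-closed, bounded, convex subsets of $X$, and let $F:S\to W_{wbc}(X)$ be a multi-valued map. Then $F$ admits an additive selection, i.e. a map $g:S\to X$ with $g(s+t)=g(s)+g(t)$ for all $s,t\in S$ and $g(s)\in F(s)$ for all $s\in S$, if and only if there exists a function $f:S\to X$ such that $f(s+t)-f(t)\in F(s)$ for all $s,t\in S$.
   Context: $S$ is left amenable if there is a norm-one linear functional $m$ on $\ell_\infty(S)$ with $m(e)=1$ ($e$ the constant function $1$) and $m(f)=m(f_s)$ for all $f\in\ell_\infty(S)$ and $s\in S$, where $f_s(t)=f(s+t)$. *)

theory Defs
  imports "HOL-Analysis.Analysis"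
begin

definition weak_star_topology :: "('z::real_normed_vector \<Rightarrow>\<^sub>L real) topology" where
  "weak_star_topology = pullback_topology UNIV blinfun_apply (product_topology (\<lambda>_. euclideanreal) UNIV)"

definition weak_star_closed :: "('z::real_normed_vector \<Rightarrow>\<^sub>L real) set \<Rightarrow> bool" where
  "weak_star_closed C \<longleftrightarrow> closedin weak_star_topology C"

text \<open>Given m(e) = 1, norm one is equivalent to
  |m f| \<le> sup |f| for all f in l_infinity(S).\<close>
definition linf :: "('s \<Rightarrow> real) set" where
  "linf = {f. bounded (range f)}"

definition left_amenable :: "'s::group_add itself \<Rightarrow> bool" where
  "left_amenable _ \<longleftrightarrow>
     (\<exists>m :: ('s \<Rightarrow> real) \<Rightarrow> real.
        (\<forall>f\<in>linf. \<forall>g\<in>linf. \<forall>a b. m (\<lambda>t. a * f t + b * g t) = a * m f + b * m g) \<and>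
        (\<forall>f\<in>linf. \<bar>m f\<bar> \<le> (SUP t. \<bar>f t\<bar>)) \<and>
        m (\<lambda>_. 1) = 1 \<and>
        (\<forall>f\<in>linf. \<forall>s. m f = m (\<lambda>t. f (s + t))))"

end

theory Submission
  imports Defs
begin

lemma ws_nbhd:
  fixes C :: "('z::real_normed_vector \<Rightarrow>\<^sub>L real) set"
  assumes "weak_star_closed C" "p \<notin> C"
  obtains J \<epsilon> where "finite J" "\<epsilon> > 0" "\<forall>x\<in>C. \<exists>j\<in>J. \<epsilon> \<le> \<bar>x j - p j\<bar>"
proof -
  have tsp: "topspace (weak_star_topology :: ('z \<Rightarrow>\<^sub>L real) topology) = UNIV"
    by (simp add: weak_star_topology_def topspace_pullback_topology)
  have "openin weak_star_topology (UNIV - C)"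
    using assms(1) unfolding weak_star_closed_def closedin_def tsp by simp
  then obtain V where V: "openin (product_topology (\<lambda>_. euclideanreal) UNIV) V"
      "UNIV - C = blinfun_apply -` V \<inter> UNIV"
    unfolding weak_star_topology_def openin_pullback_topology by blast
  have pV: "blinfun_apply p \<in> V" using V(2) assms(2) by blast
  then obtain U where U: "finite {i \<in> UNIV. U i \<noteq> topspace euclideanreal}"
     "\<forall>i\<in>UNIV. openin euclideanreal (U i)" "blinfun_apply p \<in> Pi\<^sub>E UNIV U" "Pi\<^sub>E UNIV U \<subseteq> V"
    using V(1) unfolding openin_product_topology_alt by blast
  define J where "J = {i. U i \<noteq> UNIV}"
  have fJ: "finite J" using U(1) by (simp add: J_def)
  have "\<forall>i. \<exists>e>0. ball (p i) e \<subseteq> U i"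
  proof
    fix i
    have "open (U i)" using U(2) by simp
    moreover have "p i \<in> U i" using U(3) by (auto simp: PiE_iff)
    ultimately show "\<exists>e>0. ball (p i) e \<subseteq> U i" using open_contains_ball by blast
  qed
  then obtain e where e: "\<And>i. e i > 0" "\<And>i. ball (p i) (e i) \<subseteq> U i" by metis
  define \<epsilon> where "\<epsilon> = Min (insert 1 (e ` J))"
  have epos: "\<epsilon> > 0" unfolding \<epsilon>_def using fJ e(1) by (subst Min_gr_iff) auto
  have ele: "\<epsilon> \<le> e i" if "i \<in> J" for i unfolding \<epsilon>_def using fJ that by (intro Min_le) auto
  have "\<forall>x\<in>C. \<exists>j\<in>J. \<epsilon> \<le> \<bar>x j - p j\<bar>"
  proof
    fix x assume "x \<in> C"
    then have "blinfun_apply x \<notin> V" using V(2) by blast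
    then have "blinfun_apply x \<notin> Pi\<^sub>E UNIV U" using U(4) by blast
    then obtain i where i: "x i \<notin> U i" by (auto simp: PiE_iff)
    then have iJ: "i \<in> J" unfolding J_def by auto
    have "x i \<notin> ball (p i) (e i)" using e(2) i by blast
    then have "e i \<le> \<bar>x i - p i\<bar>" by (simp add: dist_real_def abs_minus_commute)
    then show "\<exists>j\<in>J. \<epsilon> \<le> \<bar>x j - p j\<bar>" using ele[OF iJ] iJ by force
  qed
  then show ?thesis using that fJ epos by blast
qed

lemma sep:
  fixes C :: "('z::real_normed_vector \<Rightarrow>\<^sub>L real) set"
  assumes "weak_star_closed C" "p \<notin> C" "C \<noteq> {}" "bounded C" "convex C"
  shows "\<exists>w \<delta>. \<delta> > 0 \<and> (\<forall>x\<in>C. p w + \<delta> \<le> x w)"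
proof -
  obtain J \<epsilon> where fJ: "finite J" and ep: "\<epsilon> > 0" and sepJ: "\<forall>x\<in>C. \<exists>j\<in>J. \<epsilon> \<le> \<bar>x j - p j\<bar>"
    using ws_nbhd[OF assms(1,2)] by blast
  define Q where "Q x = (\<Sum>j\<in>J. (blinfun_apply x j)^2)" for x :: "'z \<Rightarrow>\<^sub>L real"
  define B where "B x y = (\<Sum>j\<in>J. blinfun_apply x j * blinfun_apply y j)" for x y :: "'z \<Rightarrow>\<^sub>L real"
  define W where "W a = (\<Sum>j\<in>J. blinfun_apply a j *\<^sub>R j)" for a :: "'z \<Rightarrow>\<^sub>L real"
  have BW: "blinfun_apply y (W a) = B a y" for a y
    unfolding W_def B_def
    by (simp add: blinfun.sum_right blinfun.scaleR_right mult.commute)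
  have QB: "Q x = B x x" for x unfolding Q_def B_def by (simp add: power2_eq_square)
  have Qexp: "Q (a + t *\<^sub>R b) = Q a + 2*t*B a b + t^2 * Q b" for a b t
  proof -
    have pj: "(blinfun_apply (a + t *\<^sub>R b) j)^2 = (blinfun_apply a j)^2 + 2*t*(blinfun_apply a j * blinfun_apply b j) + t^2 * (blinfun_apply b j)^2" for j
    proof -
      have "blinfun_apply (a + t *\<^sub>R b) j = blinfun_apply a j + t * blinfun_apply b j"
        by (simp only: blinfun.add_left blinfun.scaleR_left scaleR_conv_of_real of_real_eq_id id_apply)
      then show ?thesis by (simp only: power2_eq_square) (simp add: algebra_simps)
    qed
    have "Q (a + t *\<^sub>R b) = (\<Sum>j\<in>J. (blinfun_apply a j)^2 + 2*t*(blinfun_apply a j * blinfun_apply b j) + t^2 * (blinfun_apply b j)^2)"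
      unfolding Q_def using pj by (intro sum.cong) auto
    also have "\<dots> = Q a + 2*t*B a b + t^2 * Q b"
      unfolding Q_def B_def by (simp only: sum.distrib sum_distrib_left)
    finally show ?thesis .
  qed
  have Qnn: "0 \<le> Q x" for x unfolding Q_def by (intro sum_nonneg) auto
  have Qge: "\<epsilon>^2 \<le> Q (x - p)" if "x \<in> C" for x
  proof -
    from bspec[OF sepJ that] obtain j where j: "j \<in> J" "\<epsilon> \<le> \<bar>x j - p j\<bar>" ..
    have "blinfun_apply (x - p) j = blinfun_apply x j - blinfun_apply p j" by (rule blinfun.diff_left)
    then have "\<epsilon> \<le> \<bar>blinfun_apply (x - p) j\<bar>" using j(2) by metis
    then have "\<epsilon>^2 \<le> \<bar>blinfun_apply (x - p) j\<bar>^2" using ep by (intro power_mono) auto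
    also have "\<dots> = (blinfun_apply (x - p) j)^2" by (rule power2_abs)
    also have "\<dots> \<le> Q (x - p)" unfolding Q_def 
      by (rule member_le_sum[OF j(1) _ fJ]) simp
    finally show ?thesis .
  qed
  define d where "d = Inf ((\<lambda>x. Q (x - p)) ` C)"
  have bdd: "bdd_below ((\<lambda>x. Q (x - p)) ` C)" 
  proof (rule bdd_belowI)
    fix v assume "v \<in> (\<lambda>x. Q (x - p)) ` C"
    then show "0 \<le> v" using Qnn by blast
  qed
  have dle: "d \<le> Q (x - p)" if "x \<in> C" for x unfolding d_def using bdd that by (intro cInf_lower) auto
  have "\<epsilon>^2 \<le> d" unfolding d_def using assms(3) Qge by (intro cInf_greatest) auto
  moreover have "\<epsilon>^2 > 0" using ep by simp
  ultimately have dpos: "d > 0" by linarith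
  obtain R where R: "\<forall>x\<in>C. norm x \<le> R" using assms(4) bounded_iff by blast
  define D where "D = (\<Sum>j\<in>J. (2*R*norm j)^2) + 1"
  have QD: "Q (x - y) \<le> D" if "x \<in> C" "y \<in> C" for x y
  proof -
    have "Q (x - y) \<le> (\<Sum>j\<in>J. (2*R*norm j)^2)" unfolding Q_def
    proof (intro sum_mono)
      fix j
      have "\<bar>blinfun_apply (x - y) j\<bar> \<le> norm (x - y) * norm j" using norm_blinfun[of "x - y" j] by simp
      also have "\<dots> \<le> (2*R) * norm j"
      proof (intro mult_right_mono)
        have "norm (x - y) \<le> norm x + norm y" by (rule norm_triangle_ineq4)
        moreover have "norm x \<le> R" "norm y \<le> R" using R that by auto
        ultimately show "norm (x - y) \<le> 2*R" by linarith
      qed auto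
      finally have "\<bar>blinfun_apply (x - y) j\<bar>^2 \<le> (2*R*norm j)^2" by (intro power_mono) auto
      then show "(blinfun_apply (x - y) j)^2 \<le> (2*R*norm j)^2" by simp
    qed
    then show ?thesis unfolding D_def by linarith
  qed
  have Dpos: "D > 0" proof -
    have "0 \<le> (\<Sum>j\<in>J. (2*R*norm j)^2)" by (intro sum_nonneg) auto
    then show ?thesis unfolding D_def by linarith
  qed
  define t where "t = min 1 (d / (4*D))"
  have tpos: "t > 0" unfolding t_def using dpos Dpos by auto
  have t1: "t \<le> 1" unfolding t_def by auto
  have tD: "t * D \<le> d / 4"
  proof -
    have "t \<le> d / (4*D)" unfolding t_def by auto
    then have "t * D \<le> d / (4*D) * D" using Dpos by (intro mult_right_mono) auto
    then show ?thesis using Dpos by (simp add: field_simps)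
  qed
  define \<delta>0 where "\<delta>0 = t * d / 8"
  have d0pos: "\<delta>0 > 0" unfolding \<delta>0_def using tpos dpos by auto
  obtain x0 where x0: "x0 \<in> C" "Q (x0 - p) < d + \<delta>0"
  proof -
    have "Inf ((\<lambda>x. Q (x - p)) ` C) < d + \<delta>0" using d0pos d_def by simp
    then obtain v where "v \<in> (\<lambda>x. Q (x - p)) ` C" "v < d + \<delta>0"
      using cInf_lessD assms(3) by (metis image_is_empty)
    then show ?thesis using that by blast
  qed
  define a where "a = x0 - p"
  define w where "w = W a"
  have key: "p w + d/2 \<le> k w" if k: "k \<in> C" for k
  proof -
    define b where "b = k - x0"
    have "(1 - t) *\<^sub>R x0 + t *\<^sub>R k \<in> C" using assms(5) x0(1) k tpos t1 by (intro convexD) auto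
    moreover have "(1 - t) *\<^sub>R x0 + t *\<^sub>R k - p = a + t *\<^sub>R b"
      unfolding a_def b_def by (simp add: algebra_simps)
    ultimately have "d \<le> Q (a + t *\<^sub>R b)" using dle by metis
    also have "\<dots> = Q a + 2*t*B a b + t^2 * Q b" by (rule Qexp)
    finally have e1: "d \<le> Q a + 2*t*B a b + t^2 * Q b" .
    have "Q b \<le> D" unfolding b_def using QD k x0(1) by blast
    then have e2: "t^2 * Q b \<le> t^2 * D" by (intro mult_left_mono) auto
    have e3: "Q a < d + \<delta>0" using x0 a_def by simp
    have eq: "t * (2 * B a b + d/8 + t * D) = 2*t*B a b + t^2*D + \<delta>0"
      unfolding \<delta>0_def by (simp add: algebra_simps power2_eq_square)
    have "t * (2 * B a b + d/8 + t * D) > 0"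
      unfolding eq using e1 e2 e3 by linarith
    then have e4: "2 * B a b + d/8 + t * D > 0" using tpos by (simp add: zero_less_mult_iff)
    have Bab: "B a b = k w - x0 w" unfolding w_def BW[symmetric] b_def by (simp add: blinfun.diff_left)
    have Baa: "Q a = x0 w - p w" unfolding QB w_def BW[symmetric] a_def by (simp add: blinfun.diff_left)
    have "d \<le> Q a" using dle x0(1) a_def by simp
    then show ?thesis using e4 tD Bab Baa dpos by linarith
  qed
  show ?thesis using key dpos by (intro exI[of _ w] exI[of _ "d/2"]) auto
qed

lemma linfI: "(\<And>t. \<bar>f t\<bar> \<le> B) \<Longrightarrow> f \<in> linf"
  unfolding linf_def bounded_iff by (intro CollectI exI[of _ B]) auto

lemma linfD: "f \<in> linf \<Longrightarrow> \<exists>B. \<forall>t. \<bar>f t\<bar> \<le> B"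
  unfolding linf_def bounded_iff by auto

lemma mean_ge:
  fixes m :: "('s \<Rightarrow> real) \<Rightarrow> real"
  assumes lin: "\<forall>f\<in>linf. \<forall>g\<in>linf. \<forall>a b. m (\<lambda>t. a * f t + b * g t) = a * m f + b * m g"
  and bnd: "\<forall>f\<in>linf. \<bar>m f\<bar> \<le> (SUP t. \<bar>f t\<bar>)"
  and one: "m (\<lambda>_. 1) = 1"
  and h: "h \<in> linf" "\<forall>t. c \<le> h t"
  shows "c \<le> m h"
proof -
  obtain M where M: "\<forall>t. \<bar>h t\<bar> \<le> M" using linfD[OF h(1)] by blast
  define r where "r = (M - c) / 2"
  define mid where "mid = (M + c) / 2"
  define k where "k = (\<lambda>t. 1 * h t + (- mid) * 1)"
  have c1: "(\<lambda>_. 1) \<in> linf" by (rule linfI[of _ 1]) simp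
  have kb: "\<bar>k t\<bar> \<le> r" for t
  proof -
    have hc: "c \<le> h t" using h(2) by auto
    have hM: "h t \<le> M" using M abs_le_D1 by blast
    have kt: "k t = h t - mid" unfolding k_def by simp
    have k1: "k t \<le> r" using hc hM kt unfolding r_def mid_def by argo
    have k2: "- k t \<le> r" using hc hM kt unfolding r_def mid_def by argo
    show ?thesis using k1 k2 by (simp only: abs_le_iff)
  qed
  have kl: "k \<in> linf" using kb by (rule linfI)
  have "m (\<lambda>t. 1 * h t + (- mid) * 1) = 1 * m h + (- mid) * m (\<lambda>_. 1)"
    by (rule lin[rule_format, OF h(1) c1])
  then have mk: "m k = m h - mid" unfolding k_def using one by simp
  have "(SUP t. \<bar>k t\<bar>) \<le> r" by (rule cSUP_least) (use kb in auto)
  then have "\<bar>m k\<bar> \<le> r" using bnd kl by force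
  then have "- m k \<le> r" by (rule abs_le_D2)
  then show ?thesis using mk unfolding r_def mid_def by argo
qed

theorem theorem11:
  fixes F :: "'s::group_add \<Rightarrow> ('z::banach \<Rightarrow>\<^sub>L real) set"
  assumes "left_amenable TYPE('s)"
    and "\<And>s. F s \<noteq> {} \<and> weak_star_closed (F s) \<and> bounded (F s) \<and> convex (F s)"
  shows "(\<exists>g :: 's \<Rightarrow> ('z \<Rightarrow>\<^sub>L real). (\<forall>s t. g (s + t) = g s + g t) \<and> (\<forall>s. g s \<in> F s))
     \<longleftrightarrow> (\<exists>f :: 's \<Rightarrow> ('z \<Rightarrow>\<^sub>L real). \<forall>s t. f (s + t) - f t \<in> F s)"
proof
  assume "\<exists>g :: 's \<Rightarrow> ('z \<Rightarrow>\<^sub>L real). (\<forall>s t. g (s + t) = g s + g t) \<and> (\<forall>s. g s \<in> F s)"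
  then obtain g :: "'s \<Rightarrow> ('z \<Rightarrow>\<^sub>L real)" where "\<forall>s t. g (s + t) = g s + g t" "\<forall>s. g s \<in> F s" by blast
  then show "\<exists>f :: 's \<Rightarrow> ('z \<Rightarrow>\<^sub>L real). \<forall>s t. f (s + t) - f t \<in> F s"
    by (intro exI[of _ g]) simp
next
  assume "\<exists>f :: 's \<Rightarrow> ('z \<Rightarrow>\<^sub>L real). \<forall>s t. f (s + t) - f t \<in> F s"
  then obtain f :: "'s \<Rightarrow> ('z \<Rightarrow>\<^sub>L real)" where f: "\<And>s t. f (s + t) - f t \<in> F s" by blast
  obtain m :: "('s \<Rightarrow> real) \<Rightarrow> real" where
    lin: "\<forall>f\<in>linf. \<forall>g\<in>linf. \<forall>a b. m (\<lambda>t. a * f t + b * g t) = a * m f + b * m g" and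
    bnd: "\<forall>f\<in>linf. \<bar>m f\<bar> \<le> (SUP t. \<bar>f t\<bar>)" and
    one: "m (\<lambda>_. 1) = 1" and
    inv: "\<forall>f\<in>linf. \<forall>s. m f = m (\<lambda>t. f (s + t))"
    using assms(1) unfolding left_amenable_def by blast
  have lin2: "\<And>f g a b. f \<in> linf \<Longrightarrow> g \<in> linf \<Longrightarrow> m (\<lambda>t. a * f t + b * g t) = a * m f + b * m g"
    using lin by blast
  have "\<forall>s. \<exists>B. \<forall>x\<in>F s. norm x \<le> B" using assms(2) bounded_iff by blast
  then obtain BF where BF: "\<And>s x. x \<in> F s \<Longrightarrow> norm x \<le> BF s" by metis
  define \<phi> where "\<phi> s z = (\<lambda>t. blinfun_apply (f (s + t) - f t) z)" for s z
  have \<phi>b: "\<bar>\<phi> s z t\<bar> \<le> BF s * norm z" for s z t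
  proof -
    have "\<bar>\<phi> s z t\<bar> \<le> norm (f (s + t) - f t) * norm z"
      unfolding \<phi>_def using norm_blinfun[of "f (s + t) - f t" z] by simp
    also have "\<dots> \<le> BF s * norm z" using BF[OF f] by (intro mult_right_mono) auto
    finally show ?thesis .
  qed
  have \<phi>l: "\<phi> s z \<in> linf" for s z using \<phi>b by (rule linfI)
  define G where "G s z = m (\<phi> s z)" for s z
  have blG: "bounded_linear (G s)" for s
  proof (rule bounded_linear_intro[where K = "BF s"])
    fix x y
    have eq: "\<phi> s (x + y) = (\<lambda>t. 1 * \<phi> s x t + 1 * \<phi> s y t)"
      unfolding \<phi>_def by (simp add: blinfun.add_right)
    have "m (\<lambda>t. 1 * \<phi> s x t + 1 * \<phi> s y t) = 1 * m (\<phi> s x) + 1 * m (\<phi> s y)"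
      by (rule lin2[OF \<phi>l \<phi>l])
    then show "G s (x + y) = G s x + G s y" unfolding G_def eq by simp
  next
    fix r x
    have eq: "\<phi> s (r *\<^sub>R x) = (\<lambda>t. r * \<phi> s x t + 0 * \<phi> s x t)"
      unfolding \<phi>_def by (simp add: blinfun.scaleR_right)
    have "m (\<lambda>t. r * \<phi> s x t + 0 * \<phi> s x t) = r * m (\<phi> s x) + 0 * m (\<phi> s x)"
      by (rule lin2[OF \<phi>l \<phi>l])
    then show "G s (r *\<^sub>R x) = r *\<^sub>R G s x" unfolding G_def eq by simp
  next
    fix x
    have "(SUP t. \<bar>\<phi> s x t\<bar>) \<le> BF s * norm x" by (rule cSUP_least) (use \<phi>b in auto)
    have "norm (G s x) \<le> BF s * norm x" unfolding G_def real_norm_def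
      using bnd[rule_format, OF \<phi>l] \<open>(SUP t. \<bar>\<phi> s x t\<bar>) \<le> BF s * norm x\<close> by (rule order_trans)
    then show "norm (G s x) \<le> norm x * BF s" by (subst mult.commute)
  qed
  define g where "g s = Blinfun (G s)" for s
  have gapp: "blinfun_apply (g s) z = m (\<phi> s z)" for s z
    unfolding g_def G_def[symmetric] using bounded_linear_Blinfun_apply[OF blG] by simp
  have gadd: "g (s + t) = g s + g t" for s t
  proof (rule blinfun_eqI)
    fix z
    define h1 where "h1 = (\<lambda>u. \<phi> s z (t + u))"
    have h1l: "h1 \<in> linf" unfolding h1_def using \<phi>b by (intro linfI) 
    have "\<phi> (s + t) z = (\<lambda>u. 1 * h1 u + 1 * \<phi> t z u)"
      unfolding \<phi>_def h1_def by (simp add: add.assoc blinfun.diff_left)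
    moreover have "m (\<lambda>u. 1 * h1 u + 1 * \<phi> t z u) = 1 * m h1 + 1 * m (\<phi> t z)"
      by (rule lin2[OF h1l \<phi>l])
    ultimately have "m (\<phi> (s + t) z) = m h1 + m (\<phi> t z)" by simp
    also have "m h1 = m (\<phi> s z)" unfolding h1_def by (rule sym, rule inv[rule_format, OF \<phi>l])
    finally show "blinfun_apply (g (s + t)) z = blinfun_apply (g s + g t) z"
      by (simp add: gapp blinfun.add_left)
  qed
  have gmem: "g s \<in> F s" for s
  proof (rule ccontr)
    assume "g s \<notin> F s"
    then obtain w \<delta> where \<delta>: "\<delta> > 0" "\<forall>x\<in>F s. blinfun_apply (g s) w + \<delta> \<le> blinfun_apply x w"
    proof -
      have Fs: "F s \<noteq> {} \<and> weak_star_closed (F s) \<and> bounded (F s) \<and> convex (F s)" by (rule assms(2))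
      have "\<exists>w \<delta>. \<delta> > 0 \<and> (\<forall>x\<in>F s. blinfun_apply (g s) w + \<delta> \<le> blinfun_apply x w)"
        using Fs \<open>g s \<notin> F s\<close> by (intro sep) simp_all
      then show ?thesis using that by blast
    qed
    have "\<forall>t. blinfun_apply (g s) w + \<delta> \<le> \<phi> s w t"
    proof
      fix t show "blinfun_apply (g s) w + \<delta> \<le> \<phi> s w t"
        unfolding \<phi>_def by (rule bspec[OF \<delta>(2) f])
    qed
    then have "blinfun_apply (g s) w + \<delta> \<le> m (\<phi> s w)"
      by (rule mean_ge[OF lin bnd one \<phi>l])
    then show False using gapp \<delta>(1) by simp
  qed
  show "\<exists>g :: 's \<Rightarrow> ('z \<Rightarrow>\<^sub>L real). (\<forall>s t. g (s + t) = g s + g t) \<and> (\<forall>s. g s \<in> F s)"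
    using gadd gmem by blast
qed

end
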